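(* Let $\pi$ be a group and $\rho\in\mathcal R(\pi,\widetilde{\mathrm{E}}_2)$. Let $s,t\in\pi$ be commuting elements generating a subgroup of $\pi$ isomorphic to $\mathbb Z\oplus\mathbb Z$. Then the rotational parts of $\rho(s)$ and $\rho(t)$ lie in $2\pi\mathbb Z$; equivalently their images in $\mathrm{E}_2$ are translations of $\mathbb R^2$ (and $\rho(s),\rho(t)$ act as translations of $\mathbb R^3$).
   Context: $\widetilde{\mathrm{E}}_2$ is $\mathbb R^3$ with coordinates $((x,y),\theta)$ and product $((x_0,y_0),\theta_0)\cdot((x,y),\theta)=(R_{\theta_0}(x,y)^T+(x_0,y_0)^T,\theta_0+\theta)$, $R_{\theta_0}$ the rotation matrix by angle $\theta_0$; $(x,y)$ is the translational part and $\theta$ the rotational part. It is the universal cover of $\mathrm{E}_2$, the group of orientation-preserving isometries of $\mathbb R^2$. $\mathcal R(\pi,\widetilde{\mathrm{E}}_2)$ is the set of faithful homomorphisms $\pi\to\widetilde{\mathrm{E}}_2$ with discrete cocompact image. *)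

theory Defs
  imports "HOL-Analysis.Analysis" "HOL-Algebra.Algebra"
begin

text \<open>The universal cover of E_2: points ((x,y),theta) of R^3 with the twisted product.\<close>

definition rot :: "real \<Rightarrow> real \<times> real \<Rightarrow> real \<times> real" where
  "rot th p = (cos th * fst p - sin th * snd p, sin th * fst p + cos th * snd p)"

definition E2t_mult :: "(real \<times> real) \<times> real \<Rightarrow> (real \<times> real) \<times> real \<Rightarrow> (real \<times> real) \<times> real" where
  "E2t_mult g h = (rot (snd g) (fst h) + fst g, snd g + snd h)"

definition E2t :: "((real \<times> real) \<times> real) monoid" where
  "E2t = \<lparr>carrier = UNIV, monoid.mult = E2t_mult, one = ((0,0),0)\<rparr>"

definition discrete_set :: "((real \<times> real) \<times> real) set \<Rightarrow> bool" where
  "discrete_set S \<longleftrightarrow> (\<forall>g\<in>S. \<exists>e>0. \<forall>h\<in>S. dist h g < e \<longrightarrow> h = g)"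

text \<open>A subgroup Gamma is cocompact if Gamma \ E2t is compact, i.e. E2t = Gamma K for some compact K.\<close>
definition cocompact :: "((real \<times> real) \<times> real) set \<Rightarrow> bool" where
  "cocompact S \<longleftrightarrow> (\<exists>K. compact K \<and> (\<forall>g. \<exists>\<gamma>\<in>S. \<exists>k\<in>K. g = E2t_mult \<gamma> k))"

definition Rep_E2t :: "('a, 'b) monoid_scheme \<Rightarrow> ('a \<Rightarrow> (real \<times> real) \<times> real) set" where
  "Rep_E2t G = {\<rho>. \<rho> \<in> hom G E2t \<and> inj_on \<rho> (carrier G)
     \<and> discrete_set (\<rho> ` carrier G) \<and> cocompact (\<rho> ` carrier G)}"

end

theory Submission
  imports Defs "HOL-Analysis.Kronecker_Approximation_Theorem"
begin

lemma rot_add: "rot a (rot b p) = rot (a+b) p"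
  by (cases p) (simp add: rot_def cos_add sin_add algebra_simps)

lemma rot_plus: "rot a (p + q) = rot a p + rot a q"
  by (cases p, cases q) (simp add: rot_def algebra_simps)

lemma rot_minus: "rot a (p - q) = rot a p - rot a q"
  by (cases p, cases q) (simp add: rot_def algebra_simps)

lemma rot_uminus: "rot a (- p) = - rot a p"
  by (cases p) (simp add: rot_def algebra_simps)

lemma rot_0: "rot 0 p = p"
  by (cases p) (simp add: rot_def)

lemma sq_aux: "d * ((C - 1)^2 + S^2) = (C - 1) * ((C - 1) * d) + S * (S * d)" for C S d :: real
  by (simp add: power2_eq_square algebra_simps)

lemma z_aux1: "(C - 1) * (S * d) + S * ((1 - C) * d) = 0" for C S d :: real
  by (simp add: algebra_simps)

lemma z_aux2: "(C - 1) * (- S * d) + S * ((C - 1) * d) = 0" for C S d :: real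
  by (simp add: algebra_simps)

lemma rot_fix_zero:
  assumes "cos th \<noteq> 1" "rot th d = d" shows "d = 0"
proof -
  obtain d1 d2 where d: "d = (d1, d2)" by (cases d)
  let ?C = "cos th" and ?S = "sin th"
  have e1: "?C * d1 - ?S * d2 = d1" and e2: "?S * d1 + ?C * d2 = d2"
    using assms(2) by (simp_all add: d rot_def)
  have sc: "?S * ?S = 1 - ?C * ?C" using sin_squared_eq[of th] by (simp add: power2_eq_square)
  have sq: "(?C - 1)^2 + ?S^2 = 2 - 2 * ?C"
  proof -
    have "(?C - 1)^2 = ?C^2 - 2 * ?C + 1" by (simp add: power2_eq_square algebra_simps)
    then show ?thesis using sin_cos_squared_add[of th] by linarith
  qed
  have pos: "2 - 2 * ?C \<noteq> 0" using assms(1) by simp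
  have "d1 * (2 - 2 * ?C) = 0"
  proof -
    have "d1 * (2 - 2 * ?C) = d1 * ((?C - 1)^2 + ?S^2)" using sq by simp
    also have "\<dots> = (?C - 1) * ((?C - 1) * d1) + ?S * (?S * d1)" by (rule sq_aux)
    also have "(?C - 1) * d1 = ?S * d2" using e1 by (simp add: algebra_simps)
    also have "?S * d1 = (1 - ?C) * d2" using e2 by (simp add: algebra_simps)
    also have "(?C - 1) * (?S * d2) + ?S * ((1 - ?C) * d2) = 0" by (rule z_aux1)
    finally show ?thesis .
  qed
  moreover have "d2 * (2 - 2 * ?C) = 0"
  proof -
    have "d2 * (2 - 2 * ?C) = d2 * ((?C - 1)^2 + ?S^2)" using sq by simp
    also have "\<dots> = (?C - 1) * ((?C - 1) * d2) + ?S * (?S * d2)" by (rule sq_aux)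
    also have "(?C - 1) * d2 = - ?S * d1" using e2 by (simp add: algebra_simps)
    also have "?S * d2 = (?C - 1) * d1" using e1 by (simp add: algebra_simps)
    also have "(?C - 1) * (- ?S * d1) + ?S * ((?C - 1) * d1) = 0" by (rule z_aux2)
    finally show ?thesis .
  qed
  ultimately show ?thesis using pos by (simp add: d zero_prod_def)
qed

lemma rot_fix_exists:
  assumes "cos th \<noteq> 1" shows "\<exists>c. c - rot th c = a"
proof -
  obtain a1 a2 where a: "a = (a1, a2)" by (cases a)
  let ?C = "cos th" and ?S = "sin th"
  have sc: "?S * ?S = 1 - ?C * ?C" using sin_squared_eq[of th] by (simp add: power2_eq_square)
  define D where "D = 2 - 2 * ?C"
  have Dnz: "D \<noteq> 0" using assms by (simp add: D_def)
  define c1 where "c1 = ((1 - ?C) * a1 - ?S * a2) / D"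
  define c2 where "c2 = (?S * a1 + (1 - ?C) * a2) / D"
  have h1: "D * ((1 - ?C) * c1 + ?S * c2) = D * a1"
    using Dnz unfolding c1_def c2_def
    by (simp add: field_simps) (simp add: algebra_simps D_def sc)
  have h2: "D * (- ?S * c1 + (1 - ?C) * c2) = D * a2"
    using Dnz unfolding c1_def c2_def
    by (simp add: field_simps) (simp add: algebra_simps D_def sc)
  have h1': "(1 - ?C) * c1 + ?S * c2 = a1" using h1 Dnz by simp
  have h2': "- ?S * c1 + (1 - ?C) * c2 = a2" using h2 Dnz by simp
  have "c1 - (?C * c1 - ?S * c2) = a1" using h1' by (simp add: algebra_simps)
  moreover have "c2 - (?S * c1 + ?C * c2) = a2" using h2' by (simp add: algebra_simps)
  ultimately have "(c1, c2) - rot th (c1, c2) = a"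
    unfolding a rot_def by simp
  then show ?thesis by blast
qed

lemma cont_small:
  fixes c :: "real \<times> real"
  assumes "e > 0"
  shows "\<exists>d>0. \<forall>x::real. \<bar>x\<bar> < d \<longrightarrow> dist (c - rot x c, x) ((0,0),0) < e"
proof -
  let ?F = "\<lambda>x::real. (c - rot x c, x)"
  have "continuous (at 0) ?F"
    unfolding rot_def by (intro continuous_intros)
  then obtain d where "d > 0" "\<forall>x'. dist x' 0 < d \<longrightarrow> dist (?F x') (?F 0) < e"
    using assms unfolding continuous_at_eps_delta by blast
  moreover have "?F 0 = ((0,0),0)" by (simp add: rot_0 zero_prod_def)
  ultimately show ?thesis by (auto simp: dist_real_def)
qed

lemma dirichlet2:
  fixes th ph d :: real
  assumes "d > 0"
  shows "\<exists>(p::int) (q::int). (p \<noteq> 0 \<or> q \<noteq> 0) \<and> \<bar>p * th + q * ph\<bar> < d"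
proof (cases "ph = 0")
  case True
  then show ?thesis using assms by (intro exI[of _ 0] exI[of _ 1]) auto
next
  case False
  obtain N :: nat where N: "N > \<bar>ph\<bar> / d" using reals_Archimedean2 by blast
  have "\<bar>ph\<bar> / d \<ge> 0" using assms by simp
  then have "real N > 0" using N by linarith
  then have N0: "N > 0" by simp
  obtain q p where q: "0 < q" and pq: "\<bar>of_int q * (th / ph) - of_int (p 0)\<bar> < 1 / N"
    by (rule Dirichlet_approx_simult[OF N0, where \<theta> = "\<lambda>_. th / ph" and n = 1]) auto
  have "\<bar>q * th + (- p 0) * ph\<bar> = \<bar>ph\<bar> * \<bar>of_int q * (th / ph) - of_int (p 0)\<bar>"
    using False by (simp add: abs_mult[symmetric] field_simps)
  also have "\<dots> \<le> \<bar>ph\<bar> * (1 / N)" using pq by (intro mult_left_mono) auto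
  also have "\<dots> < d" using N N0 assms by (simp add: field_simps)
  finally show ?thesis using q by (intro exI[of _ q] exI[of _ "- p 0"]) auto
qed


lemma E2t_mult_fix:
  assumes "fst g = c - rot (snd g) c" "fst h = c - rot (snd h) c"
  shows "fst (E2t_mult g h) = c - rot (snd (E2t_mult g h)) c"
proof -
  have "fst (E2t_mult g h) = rot (snd g) (c - rot (snd h) c) + (c - rot (snd g) c)"
    by (simp add: E2t_mult_def assms(2)[symmetric] assms(1)[symmetric])
  also have "\<dots> = c - rot (snd g + snd h) c" by (simp add: rot_minus rot_add)
  finally show ?thesis by (simp add: E2t_mult_def)
qed

lemma E2t_inv_fix:
  assumes "E2t_mult g h = ((0,0),0)" "fst g = c - rot (snd g) c"
  shows "fst h = c - rot (snd h) c \<and> snd h = - snd g"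
proof -
  have 1: "rot (snd g) (fst h) + fst g = 0" and 2: "snd g + snd h = 0"
    using assms(1) by (simp_all add: E2t_mult_def zero_prod_def)
  have 3: "rot (snd g) (fst h) = - fst g" using 1 by (simp add: eq_neg_iff_add_eq_0)
  have "fst h = rot (- snd g) (rot (snd g) (fst h))" by (simp add: rot_add rot_0)
  also have "\<dots> = c - rot (- snd g) c" unfolding 3 assms(2)
    by (simp add: rot_uminus rot_minus rot_add rot_0)
  moreover have 4: "snd h = - snd g" using 2 by linarith
  ultimately show ?thesis by simp
qed

lemma key:
  fixes G :: "('a, 'b) monoid_scheme" (structure) and \<rho> :: "'a \<Rightarrow> (real \<times> real) \<times> real" and s t :: 'a
  assumes grp: "group G"
    and rho: "\<rho> \<in> Rep_E2t G"
    and s: "s \<in> carrier G" and t: "t \<in> carrier G"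
    and comm: "s \<otimes>\<^bsub>G\<^esub> t = t \<otimes>\<^bsub>G\<^esub> s"
    and iso: "G\<lparr>carrier := generate G {s, t}\<rparr> \<cong> integer_group \<times>\<times> integer_group"
    and nt: "\<not> (\<exists>k::int. snd (\<rho> s) = 2 * pi * of_int k)"
  shows False
proof -
  interpret group G by fact
  define K where "K = generate G {s,t}"
  have stG: "{s,t} \<subseteq> carrier G" using s t by auto
  have KG: "K \<subseteq> carrier G" unfolding K_def using generate_incl[OF stG] .
  have Ksub: "subgroup K G" unfolding K_def by (rule generate_is_subgroup[OF stG])
  have sK: "s \<in> K" and tK: "t \<in> K" unfolding K_def by (auto intro: generate.incl)
  have oneK: "\<one> \<in> K" using subgroup.one_closed[OF Ksub] .
  have mK: "x \<in> K \<Longrightarrow> y \<in> K \<Longrightarrow> x \<otimes> y \<in> K" for x y using subgroup.m_closed[OF Ksub] .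
  have iK: "x \<in> K \<Longrightarrow> inv x \<in> K" for x using subgroup.m_inv_closed[OF Ksub] .
  have rhom: "\<rho> \<in> hom G E2t" and rinj: "inj_on \<rho> (carrier G)"
    and rdisc: "discrete_set (\<rho> ` carrier G)"
    using rho unfolding Rep_E2t_def by auto
  have rmul: "x \<in> carrier G \<Longrightarrow> y \<in> carrier G \<Longrightarrow> \<rho> (x \<otimes> y) = E2t_mult (\<rho> x) (\<rho> y)" for x y
    using hom_mult[OF rhom] by (simp add: E2t_def)
  have rone: "\<rho> \<one> = ((0,0),0)"
  proof -
    obtain v a where va: "\<rho> \<one> = (v, a)" by (cases "\<rho> \<one>")
    have "\<rho> \<one> = E2t_mult (\<rho> \<one>) (\<rho> \<one>)" using rmul[of \<one> \<one>] by simp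
    then have "v = 0 \<and> a = 0" by (auto simp: va E2t_mult_def rot_0)
    then have a0: "a = 0" and "v = 0" by auto
    with \<open>a = 0\<close> show ?thesis by (simp add: va zero_prod_def)
  qed
  have "iso (G\<lparr>carrier := K\<rparr>) (integer_group \<times>\<times> integer_group) \<noteq> {}"
    using iso unfolding is_iso_def K_def .
  then obtain f where f: "f \<in> iso (G\<lparr>carrier := K\<rparr>) (integer_group \<times>\<times> integer_group)"
    by blast
  have fhom: "f \<in> hom (G\<lparr>carrier := K\<rparr>) (integer_group \<times>\<times> integer_group)"
    and fbij: "bij_betw f K UNIV"
    using f unfolding iso_def by (auto simp: integer_group_def)
  have fmul: "f (x \<otimes> y) = (fst (f x) + fst (f y), snd (f x) + snd (f y))"
    if "x \<in> K" "y \<in> K" for x y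
    using hom_mult[OF fhom, of x y] that
    by (cases "f x", cases "f y") (simp add: integer_group_def)
  have fone: "f \<one> = (0, 0)"
  proof -
    obtain u w where uw: "f \<one> = (u, w)" by (cases "f \<one>")
    have "(u, w) = (u + u, w + w)"
    proof -
      have "(u, w) = f (\<one> \<otimes> \<one>)" using uw by simp
      also have "\<dots> = (fst (f \<one>) + fst (f \<one>), snd (f \<one>) + snd (f \<one>))"
        by (rule fmul[OF oneK oneK])
      also have "\<dots> = (u + u, w + w)" unfolding uw by simp
      finally show ?thesis .
    qed
    then show ?thesis using uw by simp
  qed
  have finv: "f (inv x) = (- fst (f x), - snd (f x))" if "x \<in> K" for x
  proof -
    have "x \<otimes> inv x = \<one>" using that KG by auto
    then have "(0, 0) = (fst (f x) + fst (f (inv x)), snd (f x) + snd (f (inv x)))"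
      using fone fmul[OF that iK[OF that]] by simp
    then show ?thesis by (cases "f (inv x)") (simp add: eq_neg_iff_add_eq_0 add.commute)
  qed
  define th where "th = snd (\<rho> s)"
  define ph where "ph = snd (\<rho> t)"
  have cth: "cos th \<noteq> 1"
  proof
    assume "cos th = 1"
    then obtain n :: int where "th = of_int n * 2 * pi" using cos_one_2pi_int by blast
    then have "snd (\<rho> s) = 2 * pi * of_int n" by (simp add: th_def algebra_simps)
    with nt show False by blast
  qed
  obtain c where c: "c - rot th c = fst (\<rho> s)" using rot_fix_exists[OF cth] by blast
  define fx where "fx g \<longleftrightarrow> fst g = c - rot (snd g) c" for g :: "(real \<times> real) \<times> real"
  have fs: "fx (\<rho> s)" using c by (simp add: fx_def th_def)
  have ft: "fx (\<rho> t)"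
  proof -
    define b where "b = fst (\<rho> t)"
    have "\<rho> (s \<otimes> t) = \<rho> (t \<otimes> s)" using comm by simp
    then have "E2t_mult (\<rho> s) (\<rho> t) = E2t_mult (\<rho> t) (\<rho> s)" using rmul s t by simp
    then have cm: "rot th b + fst (\<rho> s) = rot ph (fst (\<rho> s)) + b"
      by (simp add: E2t_mult_def th_def ph_def b_def)
    have com: "rot (ph + th) c = rot (th + ph) c" by (simp add: add.commute)
    have cm': "rot th b + (c - rot th c) = rot ph c - rot (th + ph) c + b"
      using cm unfolding c[symmetric] by (simp add: rot_minus rot_add com)
    have rb: "rot th b = rot ph c - rot (th + ph) c + b - (c - rot th c)"
      using cm' by (simp add: eq_diff_eq)
    define d where "d = rot ph c + b - c"
    have "rot th d = rot (th + ph) c + rot th b - rot th c"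
      by (simp add: d_def rot_plus rot_minus rot_add)
    also have "\<dots> = d" unfolding rb d_def by (simp add: algebra_simps)
    finally have "rot th d = d" .
    then have "d = 0" using rot_fix_zero[OF cth] by blast
    then show ?thesis unfolding fx_def d_def b_def ph_def by (simp add: algebra_simps)
  qed
  define Q where "Q x \<longleftrightarrow> x \<in> K \<and> fx (\<rho> x)" for x
  have Qone: "Q \<one>" unfolding Q_def fx_def using oneK by (simp add: rone rot_0 zero_prod_def)
  have Qmul: "Q (x \<otimes> y) \<and> snd (\<rho> (x \<otimes> y)) = snd (\<rho> x) + snd (\<rho> y)
      \<and> f (x \<otimes> y) = (fst (f x) + fst (f y), snd (f x) + snd (f y))"
    if "Q x" "Q y" for x y
  proof -
    have xK: "x \<in> K" "y \<in> K" using that unfolding Q_def by auto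
    then have xG: "x \<in> carrier G" "y \<in> carrier G" using KG by auto
    have r: "\<rho> (x \<otimes> y) = E2t_mult (\<rho> x) (\<rho> y)" by (rule rmul[OF xG])
    have fx1: "fst (\<rho> x) = c - rot (snd (\<rho> x)) c" "fst (\<rho> y) = c - rot (snd (\<rho> y)) c"
      using that unfolding Q_def fx_def by auto
    have fxy: "fx (\<rho> (x \<otimes> y))" unfolding r fx_def by (rule E2t_mult_fix[OF fx1])
    have sxy: "snd (\<rho> (x \<otimes> y)) = snd (\<rho> x) + snd (\<rho> y)" unfolding r by (simp add: E2t_mult_def)
    show ?thesis using fxy sxy mK[OF xK] fmul[OF xK] unfolding Q_def by blast
  qed
  have Qinv: "Q (inv x) \<and> snd (\<rho> (inv x)) = - snd (\<rho> x)
      \<and> f (inv x) = (- fst (f x), - snd (f x))"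
    if "Q x" for x
  proof -
    have xK: "x \<in> K" using that unfolding Q_def by auto
    then have xG: "x \<in> carrier G" using KG by auto
    have fx1: "fst (\<rho> x) = c - rot (snd (\<rho> x)) c" using that unfolding Q_def fx_def by auto
    have "\<rho> (x \<otimes> inv x) = \<rho> \<one>" using xG by simp
    then have "E2t_mult (\<rho> x) (\<rho> (inv x)) = ((0,0),0)"
      using rmul[OF xG inv_closed[OF xG]] rone by simp
    from E2t_inv_fix[OF this fx1] have "fx (\<rho> (inv x))" "snd (\<rho> (inv x)) = - snd (\<rho> x)"
      unfolding fx_def by auto
    then show ?thesis using iK[OF xK] finv[OF xK] unfolding Q_def by blast
  qed
  have Qnat: "Q (x [^] n) \<and> snd (\<rho> (x [^] n)) = real n * snd (\<rho> x)
      \<and> f (x [^] n) = (int n * fst (f x), int n * snd (f x))"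
    if "Q x" for x and n :: nat
  proof (induction n)
    case 0
    then show ?case using Qone rone fone by simp
  next
    case (Suc n)
    have IH1: "Q (x [^] n)" and IH2: "snd (\<rho> (x [^] n)) = real n * snd (\<rho> x)"
      and IH3: "f (x [^] n) = (int n * fst (f x), int n * snd (f x))" using Suc.IH by auto
    note M = Qmul[OF IH1 that]
    have e: "x [^] Suc n = x [^] n \<otimes> x" by simp
    have A: "Q (x [^] Suc n)" unfolding e using M by blast
    have B: "snd (\<rho> (x [^] Suc n)) = real (Suc n) * snd (\<rho> x)"
      unfolding e using M IH2 by (simp add: algebra_simps)
    have C: "f (x [^] Suc n) = (int (Suc n) * fst (f x), int (Suc n) * snd (f x))"
      unfolding e using M IH3 by (simp add: algebra_simps)
    show ?case using A B C by blast
  qed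
  have Qint: "Q (x [^] z) \<and> snd (\<rho> (x [^] z)) = real_of_int z * snd (\<rho> x)
      \<and> f (x [^] z) = (z * fst (f x), z * snd (f x))"
    if "Q x" for x and z :: int
  proof (cases "z < 0")
    case True
    define y where "y = x [^] nat (- z)"
    note yq = Qnat[OF that, of "nat (- z)", folded y_def]
    have y: "Q y" "snd (\<rho> y) = real (nat (- z)) * snd (\<rho> x)"
      "f y = (int (nat (- z)) * fst (f x), int (nat (- z)) * snd (f x))"
      using conjunct1[OF yq] conjunct1[OF conjunct2[OF yq]] conjunct2[OF conjunct2[OF yq]] by -
    note iv = Qinv[OF y(1)]
    have xG: "x \<in> carrier G" using that KG unfolding Q_def by auto
    have zz: "z = - int (nat (- z))" using True by simp
    have e: "x [^] z = inv y" unfolding y_def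
      by (subst zz) (rule int_pow_neg_int[OF xG])
    have n1: "real (nat (- z)) = - real_of_int z" using True by simp
    have n2: "int (nat (- z)) = - z" using True by simp
    have r1: "snd (\<rho> (inv y)) = real_of_int z * snd (\<rho> x)"
      using conjunct1[OF conjunct2[OF iv]] y(2) n1 by simp
    have r2: "f (inv y) = (z * fst (f x), z * snd (f x))"
      using conjunct2[OF conjunct2[OF iv]] y(3) n2 by simp
    show ?thesis unfolding e using conjunct1[OF iv] r1 r2 by blast
  next
    case False
    have zz: "z = int (nat z)" using False by simp
    have e: "x [^] z = x [^] nat z" by (subst zz) (rule int_pow_int)
    have n1: "real (nat z) = real_of_int z" using False by simp
    have n2: "int (nat z) = z" using False by simp
    show ?thesis unfolding e by (rule Qnat[OF that, of "nat z", unfolded n1 n2])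
  qed
  have Qs: "Q s" and Qt: "Q t" using fs ft sK tK unfolding Q_def by auto
  have o1: "\<rho> \<one> \<in> \<rho> ` carrier G" by simp
  have "\<exists>e>0. \<forall>h\<in>\<rho> ` carrier G. dist h (\<rho> \<one>) < e \<longrightarrow> h = \<rho> \<one>"
    using rdisc o1 unfolding discrete_set_def by (rule bspec)
  then obtain e where e: "e > 0" "\<forall>h\<in>\<rho> ` carrier G. dist h (\<rho> \<one>) < e \<longrightarrow> h = \<rho> \<one>"
    by (elim exE conjE) (rule that; assumption)
  obtain dl where dl: "dl > 0" "\<forall>x::real. \<bar>x\<bar> < dl \<longrightarrow> dist (c - rot x c, x) ((0,0),0) < e"
    using cont_small[OF e(1), of c] by (elim exE conjE) (rule that; assumption)
  obtain p q :: int where pq: "p \<noteq> 0 \<or> q \<noteq> 0" "\<bar>p * th + q * ph\<bar> < dl"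
    using dirichlet2[OF dl(1), of th ph] by (elim exE conjE) (rule that; simp)
  define a where "a = s [^] p \<otimes> t [^] q"
  have Qa: "Q a \<and> snd (\<rho> a) = p * th + q * ph
      \<and> f a = (p * fst (f s) + q * fst (f t), p * snd (f s) + q * snd (f t))"
  proof -
    note A = Qint[OF Qs, of p]
    note B = Qint[OF Qt, of q]
    note M = Qmul[OF conjunct1[OF A] conjunct1[OF B], folded a_def]
    have 1: "Q a" using M by blast
    have 2: "snd (\<rho> a) = p * th + q * ph" unfolding th_def ph_def
      using conjunct1[OF conjunct2[OF M]] conjunct1[OF conjunct2[OF A]] conjunct1[OF conjunct2[OF B]]
      by simp
    have 3: "f a = (p * fst (f s) + q * fst (f t), p * snd (f s) + q * snd (f t))"
      using conjunct2[OF conjunct2[OF M]] conjunct2[OF conjunct2[OF A]] conjunct2[OF conjunct2[OF B]]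
      by simp
    show ?thesis using 1 2 3 by blast
  qed
  have aG: "a \<in> carrier G" using Qa KG unfolding Q_def by auto
  have ra: "\<rho> a = (c - rot (snd (\<rho> a)) c, snd (\<rho> a))"
    using Qa unfolding Q_def fx_def by (cases "\<rho> a") simp
  have "\<bar>snd (\<rho> a)\<bar> < dl" using Qa pq(2) by simp
  then have "dist (c - rot (snd (\<rho> a)) c, snd (\<rho> a)) ((0,0),0) < e" using dl(2) by blast
  then have "dist (\<rho> a) (\<rho> \<one>) < e" unfolding rone using ra by simp
  then have "\<rho> a = \<rho> \<one>" using e(2) aG by blast
  then have "a = \<one>" using rinj aG by (auto dest: inj_onD)
  then have fa0: "f a = (0, 0)" using fone by simp
  define a1 where "a1 = fst (f s)"
  define b1 where "b1 = snd (f s)"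
  define a2 where "a2 = fst (f t)"
  define b2 where "b2 = snd (f t)"
  have E1: "p * a1 + q * a2 = 0" and E2: "p * b1 + q * b2 = 0"
    using Qa fa0 by (simp_all add: a1_def a2_def b1_def b2_def)
  have span: "\<exists>m n. f x = (m * a1 + n * a2, m * b1 + n * b2)" if "x \<in> K" for x
    using that unfolding K_def
  proof (induction x rule: generate.induct)
    case one
    then show ?case using fone by (intro exI[of _ 0] exI[of _ 0]) simp
  next
    case (incl h)
    then show ?case
    proof
      assume "h = s" then show ?case by (intro exI[of _ 1] exI[of _ 0]) (simp add: a1_def b1_def)
    next
      assume "h \<in> {t}" then show ?case by (intro exI[of _ 0] exI[of _ 1]) (simp add: a2_def b2_def)
    qed
  next
    case (inv h)
    then have "f (inv h) = (- fst (f h), - snd (f h))" using finv sK tK by auto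
    moreover from inv have "h = s \<or> h = t" by auto
    ultimately show ?case
    proof (elim disjE)
      assume "f (inv h) = (- fst (f h), - snd (f h))" "h = s"
      then show ?case by (intro exI[of _ "-1"] exI[of _ 0]) (simp add: a1_def b1_def)
    next
      assume "f (inv h) = (- fst (f h), - snd (f h))" "h = t"
      then show ?case by (intro exI[of _ 0] exI[of _ "-1"]) (simp add: a2_def b2_def)
    qed
  next
    case (eng h1 h2)
    then obtain m1 n1 m2 n2 where "f h1 = (m1 * a1 + n1 * a2, m1 * b1 + n1 * b2)"
      "f h2 = (m2 * a1 + n2 * a2, m2 * b1 + n2 * b2)" by blast
    moreover have "f (h1 \<otimes> h2) = (fst (f h1) + fst (f h2), snd (f h1) + snd (f h2))"
      using fmul eng(1,2) unfolding K_def by blast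
    ultimately show ?case
      by (intro exI[of _ "m1 + m2"] exI[of _ "n1 + n2"]) (simp add: algebra_simps)
  qed
  have "(1, 0) \<in> f ` K" "(0, 1) \<in> f ` K" using fbij unfolding bij_betw_def by auto
  then obtain x1 x2 where x12: "x1 \<in> K" "f x1 = (1, 0)" "x2 \<in> K" "f x2 = (0, 1)" by auto
  obtain m n where mn: "f x1 = (m * a1 + n * a2, m * b1 + n * b2)" using span[OF x12(1)] by blast
  obtain m' n' where mn': "f x2 = (m' * a1 + n' * a2, m' * b1 + n' * b2)" using span[OF x12(3)] by blast
  have F: "1 = m * a1 + n * a2" "0 = m * b1 + n * b2"
    "0 = m' * a1 + n' * a2" "1 = m' * b1 + n' * b2"
    using mn mn' x12 by simp_all
  define det where "det = a1 * b2 - a2 * b1"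
  have "p * det = b2 * (p * a1 + q * a2) - a2 * (p * b1 + q * b2)" unfolding det_def by (simp add: algebra_simps)
  then have pd: "p * det = 0" using E1 E2 by simp
  have "q * det = a1 * (p * b1 + q * b2) - b1 * (p * a1 + q * a2)" unfolding det_def by (simp add: algebra_simps)
  then have qd: "q * det = 0" using E1 E2 by simp
  have det0: "det = 0" using pd qd pq(1) by auto
  have "(m * n' - n * m') * det = (m * a1 + n * a2) * (m' * b1 + n' * b2) - (m * b1 + n * b2) * (m' * a1 + n' * a2)"
    unfolding det_def by (simp add: algebra_simps)
  also have "\<dots> = 1" using F by simp
  finally show False using det0 by simp
qed

theorem lemma5:
  fixes G :: "('a, 'b) monoid_scheme" and \<rho> :: "'a \<Rightarrow> (real \<times> real) \<times> real" and s t :: 'a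
  assumes "group G"
    and "\<rho> \<in> Rep_E2t G"
    and "s \<in> carrier G" and "t \<in> carrier G"
    and "s \<otimes>\<^bsub>G\<^esub> t = t \<otimes>\<^bsub>G\<^esub> s"
    and "G\<lparr>carrier := generate G {s, t}\<rparr> \<cong> integer_group \<times>\<times> integer_group"
  shows "(\<exists>k::int. snd (\<rho> s) = 2 * pi * of_int k) \<and> (\<exists>k::int. snd (\<rho> t) = 2 * pi * of_int k)"
proof
  show "\<exists>k::int. snd (\<rho> s) = 2 * pi * of_int k"
    using key[OF assms] by blast
  have "G\<lparr>carrier := generate G {t, s}\<rparr> \<cong> integer_group \<times>\<times> integer_group"
    using assms(6) by (simp add: insert_commute)
  then show "\<exists>k::int. snd (\<rho> t) = 2 * pi * of_int k"
    using key[OF assms(1,2,4,3) assms(5)[symmetric]] by blast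
qed

end
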